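(* Let $n=2m+4$. There exists a directed cycle $\mathcal{C}$ in the hypercube graph on $\{0,1\}^n$ with the following properties: (i) $\mathcal{C}$ is simple (does not intersect itself); (ii) $\mathcal{C}$ is divided into a cyclic sequence of $M$ contiguous chunks $K_1,\dots,K_M$ of three steps each, where $M$ is even, every odd-indexed chunk consists of three upward steps and every even-indexed chunk consists of three downward steps; (iii) $M\ge 2^m$; (iv) for every $i$, the second edge $e$ of $K_i$ is parallel to the first edge $e'$ of $K_{i+1}$ (indices taken cyclically, $K_{M+1}=K_1$), and moreover $e'\succ e$ if $i$ is odd and $e'\prec e$ if $i$ is even.
   Context: Identify $\{0,1\}^n$ with subsets of $[n]$; the hypercube graph has edges $(S,S+k)$ for $k\notin S$. A step of the cycle is upward if it adds an element and downward if it removes one. Two edges $(S,S+k)$ and $(T,T+l)$ are parallel if $k=l$; for parallel edges, $(S,S+k)\prec(T,T+k)$ means $S\subsetneq T$, and $e'\succ e$ means $e\prec e'$. *)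

theory Defs
  imports Main
begin

text \<open>Vertices of the hypercube on [n] = {0..<n} are subsets of {..<n}.
  An upward step from S to T adds one element k < n with k not in S.\<close>
definition up_step :: "nat \<Rightarrow> nat set \<Rightarrow> nat set \<Rightarrow> bool" where
  "up_step n S T \<longleftrightarrow> (\<exists>k. k < n \<and> k \<notin> S \<and> T = insert k S)"

text \<open>The (undirected) hypercube edge traversed by a step between S and T,
  represented as the pair (lower endpoint, upper endpoint), i.e. (S, S+k).\<close>
definition edge_of :: "nat set \<Rightarrow> nat set \<Rightarrow> nat set \<times> nat set" where
  "edge_of S T = (S \<inter> T, S \<union> T)"

definition parallel :: "nat set \<times> nat set \<Rightarrow> nat set \<times> nat set \<Rightarrow> bool" where
  "parallel e e' \<longleftrightarrow> snd e - fst e = snd e' - fst e'"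

definition edge_prec :: "nat set \<times> nat set \<Rightarrow> nat set \<times> nat set \<Rightarrow> bool" where
  "edge_prec e e' \<longleftrightarrow> parallel e e' \<and> fst e \<subset> fst e'"

end

theory Submission
  imports Defs
begin


definition gb :: "nat \<Rightarrow> nat \<Rightarrow> bool" where
  "gb i k \<longleftrightarrow> (odd (i div 2^k) \<noteq> odd (i div 2^Suc k))"

lemma Suc_div_pow: "Suc i div 2^k = i div 2^k + (if (2::nat)^k dvd Suc i then 1 else 0)"
proof -
  have p: "(2::nat)^k > 0" by simp
  have e: "i = (i div 2^k) * 2^k + i mod 2^k" by (metis div_mult_mod_eq)
  have r: "i mod 2^k < 2^k" using p by simp
  show ?thesis
  proof (cases "Suc (i mod 2^k) = 2^k")
    case True
    then have "Suc i = (i div 2^k + 1) * 2^k" using e by (metis add_Suc_right mult_Suc add.commute Suc_eq_plus1)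
    then show ?thesis by simp
  next
    case False
    then have r2: "Suc (i mod 2^k) < 2^k" using r by linarith
    have "Suc i = (i div 2^k) * 2^k + Suc (i mod 2^k)" using e by (metis add_Suc_right)
    have g1: "\<And>q s b. (s::nat) < b \<Longrightarrow> (q*b + s) div b = q" by simp
    have g2: "\<And>q s b. (s::nat) < b \<Longrightarrow> (q*b + s) mod b = s" by simp
    have "Suc i div 2^k = i div 2^k"
      using g1[OF r2, of "i div 2^k"] \<open>Suc i = _\<close> by simp
    moreover have "Suc i mod 2^k = Suc (i mod 2^k)" using r2 by (simp add: mod_Suc)
    ultimately have "Suc i div 2^k = i div 2^k" "Suc i mod 2^k = Suc (i mod 2^k)" by blast+
    then show ?thesis by (simp add: dvd_eq_mod_eq_0)
  qed
qed

lemma gb_change: "gb (Suc i) k \<noteq> gb i k \<longleftrightarrow> ((2::nat)^k dvd Suc i \<and> \<not> 2^Suc k dvd Suc i)"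
proof -
  have d: "(2::nat)^Suc k dvd Suc i \<Longrightarrow> 2^k dvd Suc i"
    by (metis dvd_mult_right power_Suc)
  show ?thesis unfolding gb_def Suc_div_pow[of i k] Suc_div_pow[of i "Suc k"]
    using d by auto
qed

lemma exists_mult: "x > 0 \<Longrightarrow> \<exists>k. (2::nat)^k dvd x \<and> \<not> 2^Suc k dvd x"
proof (induction x rule: less_induct)
  case (less x)
  show ?case
  proof (cases "even x")
    case True
    then obtain y where y: "x = 2*y" by blast
    then have "y < x" "y > 0" using less.prems by auto
    then obtain k where "2^k dvd y" "\<not> 2^Suc k dvd y" using less.IH by blast
    then have "2^Suc k dvd x" "\<not> 2^Suc (Suc k) dvd x" using y by auto
    then show ?thesis by blast
  next
    case False
    then show ?thesis by (intro exI[of _ 0]) auto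
  qed
qed

lemma gb_step: "\<exists>b. (\<forall>k. k \<noteq> b \<longrightarrow> gb (Suc i) k = gb i k) \<and> gb (Suc i) b \<noteq> gb i b
   \<and> (2::nat)^b dvd Suc i"
proof -
  obtain b where b: "(2::nat)^b dvd Suc i" "\<not> 2^Suc b dvd Suc i" using exists_mult[of "Suc i"] by auto
  have "gb (Suc i) k = gb i k" if "k \<noteq> b" for k
  proof (cases "k < b")
    case True
    then have "(2::nat)^Suc k dvd 2^b" by (intro le_imp_power_dvd) auto
    then have "(2::nat)^Suc k dvd Suc i" using b(1) dvd_trans by blast
    then show ?thesis using gb_change by blast
  next
    case False
    then have "k > b" using that by auto
    then have "(2::nat)^Suc b dvd 2^k" by (intro le_imp_power_dvd) auto
    then have "\<not> (2::nat)^k dvd Suc i" using b(2) dvd_trans by blast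
    then show ?thesis using gb_change by blast
  qed
  then show ?thesis using b gb_change by blast
qed

lemma gb_zero_above: "i < 2^p \<Longrightarrow> p \<le> k \<Longrightarrow> \<not> gb i k"
proof -
  assume a: "i < 2^p" "p \<le> k"
  have "(2::nat)^p \<le> 2^k" using a(2) by (intro power_increasing) auto
  then have h1: "i < 2^k" using a(1) by linarith
  have "(2::nat)^p \<le> 2^Suc k" using a(2) by (intro power_increasing) auto
  then have h2: "i < 2^Suc k" using a(1) by linarith
  have "i div 2^k = 0" "i div 2^Suc k = 0" using h1 h2 by simp_all
  then show ?thesis by (simp add: gb_def)
qed

lemma gb_0: "gb i 0 \<longleftrightarrow> (odd i \<noteq> odd (i div 2))"
  by (simp add: gb_def)

lemma gb_Sk: "gb i (Suc k) = gb (i div 2) k"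
proof -
  have "\<And>x. i div 2^Suc x = i div 2 div 2^x" by (simp add: div_mult2_eq power_Suc)
  then have a: "i div 2^Suc k = i div 2 div 2^k" "i div 2^Suc (Suc k) = i div 2 div 2^Suc k" by blast+
  show ?thesis unfolding gb_def a ..
qed

lemma gb_allfalse: "(\<forall>k. \<not> gb i k) \<Longrightarrow> i = 0"
proof (induction i rule: less_induct)
  case (less i)
  show ?case
  proof (rule ccontr)
    assume "i \<noteq> 0"
    then have "i div 2 < i" by simp
    moreover have "\<forall>k. \<not> gb (i div 2) k" using less.prems gb_Sk by metis
    ultimately have "i div 2 = 0" using less.IH by blast
    with \<open>i \<noteq> 0\<close> have "i = 1" by auto
    then show False using less.prems[rule_format, of 0] by (simp add: gb_def)
  qed
qed

lemma gb_inj: "(\<forall>k. gb i k = gb j k) \<Longrightarrow> i = j"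
proof (induction i arbitrary: j rule: less_induct)
  case (less i)
  show ?case
  proof (cases "i = 0")
    case True
    then have "\<forall>k. \<not> gb j k" using less.prems by (simp add: gb_def)
    then show ?thesis using gb_allfalse True by simp
  next
    case False
    then have "i div 2 < i" by simp
    moreover have "\<forall>k. gb (i div 2) k = gb (j div 2) k" using less.prems gb_Sk by metis
    ultimately have h: "i div 2 = j div 2" using less.IH by blast
    have "(odd i \<noteq> odd (j div 2)) = (odd j \<noteq> odd (j div 2))" using less.prems[rule_format, of 0] h by (simp add: gb_0)
    then have "odd i = odd j" by auto
    then show ?thesis using h by (metis div_mult_mod_eq odd_iff_mod_2_eq_one even_iff_mod_2_eq_zero)
  qed
qed

lemma gb_top: assumes "k < p" shows "gb (2^p - 1) k \<longleftrightarrow> k = p - 1"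
proof -
  have s: "Suc (2^p - 1) = (2::nat)^p" by simp
  have "(2::nat)^Suc k dvd 2^p" using assms by (intro le_imp_power_dvd) auto
  then have "\<not> ((2::nat)^k dvd 2^p \<and> \<not> (2::nat)^Suc k dvd 2^p)" by blast
  then have "gb (2^p - 1) k = gb (2^p) k" using gb_change[of "2^p - 1" k] s by metis
  also have "\<dots> \<longleftrightarrow> (odd ((2::nat)^(p-k)) \<noteq> odd ((2::nat)^(p - Suc k)))"
    using assms by (simp add: gb_def power_diff)
  also have "\<dots> \<longleftrightarrow> k = p - 1" using assms by auto
  finally show ?thesis .
qed

definition enc :: "nat \<Rightarrow> (nat \<Rightarrow> bool) \<Rightarrow> nat set" where
  "enc p f = {x. x < 2*p \<and> (odd x \<longleftrightarrow> f (x div 2))}"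
definition VV :: "nat \<Rightarrow> nat \<Rightarrow> nat set" where "VV p i = enc p (gb i)"
definition nx :: "nat \<Rightarrow> nat \<Rightarrow> nat" where "nx p i = Suc i mod 2^p"
definition UU :: "nat \<Rightarrow> nat \<Rightarrow> nat set" where "UU p i = VV p i \<union> VV p (nx p i)"

lemma key: assumes "0 < p" "i < 2^p"
  shows "\<exists>b<p. (\<forall>k<p. k \<noteq> b \<longrightarrow> gb (nx p i) k = gb i k) \<and> gb (nx p i) b \<noteq> gb i b"
proof (cases "Suc i < 2^p")
  case True
  then have n: "nx p i = Suc i" by (simp add: nx_def)
  obtain b where b: "\<forall>k. k \<noteq> b \<longrightarrow> gb (Suc i) k = gb i k" "gb (Suc i) b \<noteq> gb i b" "(2::nat)^b dvd Suc i"
    using gb_step by blast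
  have "(2::nat)^b \<le> Suc i" using b(3) by (simp add: dvd_imp_le)
  then have "(2::nat)^b < 2^p" using True by linarith
  then have "b < p" using power_less_imp_less_exp by fastforce
  then show ?thesis using b n by auto
next
  case False
  then have s: "Suc i = 2^p" using assms by simp
  then have n: "nx p i = 0" by (simp add: nx_def)
  have i: "i = 2^p - 1" using s by simp
  have g0: "\<not> gb 0 k" for k by (simp add: gb_def)
  show ?thesis
    apply (rule exI[of _ "p - 1"])
    using assms(1) gb_top[of _ p] g0 n i by auto
qed

lemma enc_union:
  assumes "b < p" "\<forall>k<p. k \<noteq> b \<longrightarrow> g k = f k" "g b \<noteq> f b"
  shows "enc p f \<union> enc p g = insert (2*b + (if g b then 1 else 0)) (enc p f)"
    "(2*b + (if g b then 1 else 0)) \<notin> enc p f"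
proof -
  show "(2*b + (if g b then 1 else 0)) \<notin> enc p f" using assms by (auto simp: enc_def)
  show "enc p f \<union> enc p g = insert (2*b + (if g b then 1 else 0)) (enc p f)"
  proof (intro equalityI subsetI)
    fix x assume x: "x \<in> enc p f \<union> enc p g"
    show "x \<in> insert (2*b + (if g b then 1 else 0)) (enc p f)"
    proof (cases "x div 2 = b")
      case True
      then have "x = 2*b \<or> x = 2*b+1" by auto
      then show ?thesis
      proof
        assume "x = 2*b" then show ?thesis using x assms(3) by (auto simp: enc_def)
      next
        assume "x = 2*b+1" then show ?thesis using x assms(3) by (auto simp: enc_def)
      qed
    next
      case False
      then show ?thesis using x assms by (auto simp: enc_def)
    qed
  next
    fix x assume "x \<in> insert (2*b + (if g b then 1 else 0)) (enc p f)"
    then show "x \<in> enc p f \<union> enc p g" using assms(1) by (auto simp: enc_def split: if_splits)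
  qed
qed

lemma enc_no_both: "\<not> (2*b \<in> enc p h \<and> 2*b+1 \<in> enc p h)"
  by (auto simp: enc_def)

lemma enc_both_union:
  assumes "b < p" "g b \<noteq> f b"
  shows "2*b \<in> enc p f \<union> enc p g" "2*b+1 \<in> enc p f \<union> enc p g"
  using assms by (auto simp: enc_def)

lemma enc_eq: "(\<forall>k<p. h k = f k) \<Longrightarrow> enc p h = enc p f"
  unfolding enc_def by auto

lemma enc_eqD: assumes "enc p h = enc p f" shows "\<forall>k<p. h k = f k"
proof (intro allI impI)
  fix k assume k: "k < p"
  have "2*k + (if h k then 1 else 0) \<in> enc p h" using k by (auto simp: enc_def)
  then have "2*k + (if h k then 1 else 0) \<in> enc p f" using assms by simp
  then show "h k = f k" by (auto simp: enc_def split: if_splits)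
qed

lemma enc_sub:
  assumes "\<forall>k<p. k \<noteq> b \<longrightarrow> g k = f k" "g b \<noteq> f b"
    "enc p h \<subseteq> enc p f \<union> enc p g"
  shows "(\<forall>k<p. h k = f k) \<or> (\<forall>k<p. h k = g k)"
proof -
  have a: "h k = f k" if "k < p" "k \<noteq> b" for k
  proof -
    have "2*k + (if h k then 1 else 0) \<in> enc p h" using that by (auto simp: enc_def)
    then have "2*k + (if h k then 1 else 0) \<in> enc p f \<union> enc p g" using assms(3) by blast
    then show ?thesis using assms(1) that by (auto simp: enc_def split: if_splits)
  qed
  show ?thesis
  proof (cases "h b = f b")
    case True then show ?thesis using a by metis
  next
    case False
    then have "h b = g b" using assms(2) by auto
    then show ?thesis using a assms(1) by metis
  qed
qed

lemma gb_inj_p: "i < 2^p \<Longrightarrow> j < 2^p \<Longrightarrow> \<forall>k<p. gb i k = gb j k \<Longrightarrow> i = j"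
  apply (rule gb_inj)
  using gb_zero_above[of i p] gb_zero_above[of j p] by (metis not_le)

lemma nx_less: "nx p i < 2^p" by (simp add: nx_def)

lemma UU_struct: assumes "0 < p" "i < 2^p"
  shows "\<exists>c d b. c < 2*p \<and> d < 2*p \<and> c \<notin> VV p i \<and> UU p i = insert c (VV p i) \<and>
     d \<notin> VV p (nx p i) \<and> UU p i = insert d (VV p (nx p i)) \<and> b < p \<and> 2*b \<in> UU p i \<and> 2*b+1 \<in> UU p i"
proof -
  obtain b where b: "b < p" "\<forall>k<p. k \<noteq> b \<longrightarrow> gb (nx p i) k = gb i k" "gb (nx p i) b \<noteq> gb i b"
    using key[OF assms] by blast
  have b2: "\<forall>k<p. k \<noteq> b \<longrightarrow> gb i k = gb (nx p i) k" "gb i b \<noteq> gb (nx p i) b" using b by auto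
  note u1 = enc_union[OF b(1) b(2) b(3)]
  note u2 = enc_union[OF b(1) b2]
  note bb = enc_both_union[where g="gb (nx p i)" and f="gb i", OF b(1) b(3)]
  show ?thesis
    apply (rule exI[of _ "2*b + (if gb (nx p i) b then 1 else 0)"])
    apply (rule exI[of _ "2*b + (if gb i b then 1 else 0)"])
    apply (rule exI[of _ b])
    using u1 u2 bb b(1) unfolding UU_def VV_def by (auto simp: Un_commute)
qed

lemma VV_sub: "VV p i \<subseteq> {..<2*p}" by (auto simp: VV_def enc_def)
lemma UU_sub: "UU p i \<subseteq> {..<2*p}" by (auto simp: UU_def VV_def enc_def)

lemma VV_ne_UU: assumes "0 < p" "i < 2^p" shows "VV p j \<noteq> UU p i"
proof
  assume e: "VV p j = UU p i"
  obtain b where "2*b \<in> UU p i" "2*b+1 \<in> UU p i" using UU_struct[OF assms] by blast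
  then show False using e enc_no_both[of b p "gb j"] unfolding VV_def by simp
qed

lemma VV_inj: "i < 2^p \<Longrightarrow> j < 2^p \<Longrightarrow> VV p i = VV p j \<Longrightarrow> i = j"
  unfolding VV_def using enc_eqD gb_inj_p by metis

lemma VV_in_UU: assumes "0 < p" "i < 2^p" "j < 2^p" "VV p j \<subseteq> UU p i"
  shows "j = i \<or> j = nx p i"
proof -
  obtain b where b: "b < p" "\<forall>k<p. k \<noteq> b \<longrightarrow> gb (nx p i) k = gb i k" "gb (nx p i) b \<noteq> gb i b"
    using key[OF assms(1,2)] by blast
  have "(\<forall>k<p. gb j k = gb i k) \<or> (\<forall>k<p. gb j k = gb (nx p i) k)"
    using enc_sub[OF b(2) b(3)] assms(4) unfolding UU_def VV_def by blast
  then show ?thesis using gb_inj_p assms(2,3) nx_less by metis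
qed

lemma nx_inj: "i < 2^p \<Longrightarrow> j < 2^p \<Longrightarrow> nx p i = nx p j \<Longrightarrow> i = j"
  unfolding nx_def by (simp add: mod_Suc split: if_splits)

lemma nx_nx: assumes "2 \<le> p" "i < 2^p" shows "nx p (nx p i) \<noteq> i"
proof -
  have N: "(4::nat) \<le> 2^p" 
  proof -
    have "(2::nat)^2 \<le> 2^p" using assms(1) by (rule power_increasing) simp
    then show ?thesis by simp
  qed
  have "nx p (nx p i) = Suc (Suc i) mod 2^p" unfolding nx_def by (simp add: mod_Suc_eq)
  moreover have "Suc (Suc i) mod 2^p \<noteq> i"
  proof (cases "Suc (Suc i) < 2^p")
    case True then show ?thesis by simp
  next
    case False
    then have "Suc (Suc i) mod 2^p = Suc (Suc i) - 2^p" using assms(2) N by (simp add: le_mod_geq)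
    then show ?thesis using N False assms(2) by linarith
  qed
  ultimately show ?thesis by simp
qed

lemma UU_inj: assumes "2 \<le> p" "i < 2^p" "j < 2^p" "UU p i = UU p j" shows "i = j"
proof -
  have p: "0 < p" using assms by simp
  have s1: "VV p i \<subseteq> UU p j" "VV p (nx p i) \<subseteq> UU p j" using assms(4) unfolding UU_def by auto
  have h1: "i = j \<or> i = nx p j" using VV_in_UU[OF p assms(3) assms(2) s1(1)] .
  have h2: "nx p i = j \<or> nx p i = nx p j" using VV_in_UU[OF p assms(3) nx_less s1(2)] .
  show ?thesis
  proof (rule ccontr)
    assume ne: "i \<noteq> j"
    then have "i = nx p j" using h1 by simp
    moreover have "nx p i = j" using h2 ne nx_inj assms(2,3) by metis
    ultimately show False using nx_nx[OF assms(1) assms(3)] by simp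
  qed
qed

definition vt :: "nat \<Rightarrow> nat \<Rightarrow> nat set" where
 "vt p t = (let i = t div 6; r = t mod 6 in
   if r = 0 then VV p i else if r = 1 then insert (2*p) (VV p i)
   else if r = 2 then insert (2*p) (insert (Suc (2*p)) (VV p i))
   else if r = 3 then insert (2*p) (insert (Suc (2*p)) (UU p i))
   else if r = 4 then insert (2*p) (UU p i) else UU p i)"

lemma vt_gen: "r < 6 \<Longrightarrow> vt p (6*i+r) = (if r = 0 then VV p i else if r = 1 then insert (2*p) (VV p i)
   else if r = 2 then insert (2*p) (insert (Suc (2*p)) (VV p i))
   else if r = 3 then insert (2*p) (insert (Suc (2*p)) (UU p i))
   else if r = 4 then insert (2*p) (UU p i) else UU p i)"
  by (simp add: vt_def Let_def)

lemma vt_eqs: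
  "vt p (6*i) = VV p i"
  "vt p (6*i+1) = insert (2*p) (VV p i)"
  "vt p (6*i+2) = insert (2*p) (insert (Suc (2*p)) (VV p i))"
  "vt p (6*i+3) = insert (2*p) (insert (Suc (2*p)) (UU p i))"
  "vt p (6*i+4) = insert (2*p) (UU p i)"
  "vt p (6*i+5) = UU p i"
  using vt_gen[of 0 p i] vt_gen[of 1 p i] vt_gen[of 2 p i] vt_gen[of 3 p i] vt_gen[of 4 p i] vt_gen[of 5 p i]
  by simp_all

lemma mod6: "(r::nat) < 6 \<Longrightarrow> (6*a + r) mod (6*N) = 6*(a mod N) + r"
  by (simp add: mod_mult2_eq)

lemma vt_low: "vt p t \<inter> {..<2*p} = (if t mod 6 < 3 then VV p (t div 6) else UU p (t div 6))"
  using VV_sub[of p "t div 6"] UU_sub[of p "t div 6"] by (auto simp: vt_def Let_def)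

lemma vt_G: "2*p \<in> vt p t \<longleftrightarrow> t mod 6 \<in> {1,2,3,4}"
  using VV_sub[of p "t div 6"] UU_sub[of p "t div 6"] by (auto simp: vt_def Let_def)

lemma vt_H: "Suc (2*p) \<in> vt p t \<longleftrightarrow> t mod 6 \<in> {2,3}"
  using VV_sub[of p "t div 6"] UU_sub[of p "t div 6"] by (auto simp: vt_def Let_def)

lemma vt_sub: "vt p t \<subseteq> {..<2*p+2}"
  using VV_sub[of p "t div 6"] UU_sub[of p "t div 6"] by (auto simp: vt_def Let_def)

lemma small6: "(a::nat) < 6 \<Longrightarrow> b < 6 \<Longrightarrow> (a<3)=(b<3) \<Longrightarrow> (a\<in>{1,2,3,4}) = (b\<in>{1,2,3,4}) \<Longrightarrow> (a\<in>{2,3})=(b\<in>{2,3}) \<Longrightarrow> a=b"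
  by (simp add: eval_nat_numeral less_Suc_eq) (elim disjE; simp)

lemma vt_inj: assumes "2 \<le> p" shows "inj_on (vt p) {..<6*2^p}"
proof
  fix s t assume s: "s \<in> {..<6*2^p}" and t: "t \<in> {..<6*2^p}" and e: "vt p s = vt p t"
  have p: "0 < p" using assms by simp
  have si: "s div 6 < 2^p" "t div 6 < 2^p" using s t by auto
  have l: "(if s mod 6 < 3 then VV p (s div 6) else UU p (s div 6)) =
           (if t mod 6 < 3 then VV p (t div 6) else UU p (t div 6))"
    using vt_low[of p s] vt_low[of p t] e by simp
  have c3: "(s mod 6 < 3) = (t mod 6 < 3)"
  proof (rule ccontr)
    assume "(s mod 6 < 3) \<noteq> (t mod 6 < 3)"
    then consider "s mod 6 < 3" "\<not> t mod 6 < 3" | "\<not> s mod 6 < 3" "t mod 6 < 3" by blast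
    then show False
    proof cases
      case 1 then have "VV p (s div 6) = UU p (t div 6)" using l by simp
      then show False using VV_ne_UU[OF p si(2)] by blast
    next
      case 2 then have "UU p (s div 6) = VV p (t div 6)" using l by simp
      then show False using VV_ne_UU[OF p si(1)] by metis
    qed
  qed
  have g: "(s mod 6 \<in> {1,2,3,4}) = (t mod 6 \<in> {1,2,3,4})" using vt_G[of p s] vt_G[of p t] e by simp
  have h: "(s mod 6 \<in> {2,3}) = (t mod 6 \<in> {2,3})" using vt_H[of p s] vt_H[of p t] e by simp
  have r: "s mod 6 = t mod 6"
  proof -
    have "s mod 6 < 6" "t mod 6 < 6" by auto
    then show ?thesis using c3 g h small6 by blast
  qed
  have i: "s div 6 = t div 6"
  proof (cases "s mod 6 < 3")
    case True
    then have "VV p (s div 6) = VV p (t div 6)" using l r by simp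
    then show ?thesis using VV_inj si by blast
  next
    case False
    then have "UU p (s div 6) = UU p (t div 6)" using l r by simp
    then show ?thesis using UU_inj[OF assms] si by blast
  qed
  have "s = 6 * (s div 6) + s mod 6" "t = 6 * (t div 6) + t mod 6" by simp_all
  then show "s = t" using r i by simp
qed

lemma facts6: assumes "2 \<le> p" "i < 2^p"
  obtains c d where "c < 2*p" "d < 2*p" "c \<notin> VV p i" "UU p i = insert c (VV p i)"
     "d \<notin> VV p (nx p i)" "UU p i = insert d (VV p (nx p i))"
     "2*p \<notin> VV p i" "Suc (2*p) \<notin> VV p i" "2*p \<notin> UU p i" "Suc (2*p) \<notin> UU p i"
     "2*p \<notin> VV p (nx p i)" "Suc (2*p) \<notin> VV p (nx p i)"
proof -
  have p: "0 < p" using assms by simp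
  obtain c d where cd: "c < 2*p" "d < 2*p" "c \<notin> VV p i" "UU p i = insert c (VV p i)"
     "d \<notin> VV p (nx p i)" "UU p i = insert d (VV p (nx p i))"
    using UU_struct[OF p assms(2)] by blast
  have o: "2*p \<notin> VV p i" "Suc (2*p) \<notin> VV p i" "2*p \<notin> UU p i" "Suc (2*p) \<notin> UU p i"
     "2*p \<notin> VV p (nx p i)" "Suc (2*p) \<notin> VV p (nx p i)"
    using VV_sub[of p i] UU_sub[of p i] VV_sub[of p "nx p i"] by auto
  show ?thesis using that cd o by blast
qed

lemma step_lem: assumes "2 \<le> p" "t < 6*2^p"
  shows "if even (t div 3) then up_step (2*p+2) (vt p t) (vt p ((t+1) mod (6*2^p)))
         else up_step (2*p+2) (vt p ((t+1) mod (6*2^p))) (vt p t)"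
proof -
  define i where "i = t div 6"
  define r where "r = t mod 6"
  have t: "t = 6*i + r" unfolding i_def r_def by simp
  have i: "i < 2^p" using assms(2) unfolding i_def by auto
  obtain c d where f: "c < 2*p" "d < 2*p" "c \<notin> VV p i" "UU p i = insert c (VV p i)"
     "d \<notin> VV p (nx p i)" "UU p i = insert d (VV p (nx p i))"
     "2*p \<notin> VV p i" "Suc (2*p) \<notin> VV p i" "2*p \<notin> UU p i" "Suc (2*p) \<notin> UU p i"
     "2*p \<notin> VV p (nx p i)" "Suc (2*p) \<notin> VV p (nx p i)"
    using facts6[OF assms(1) i] by blast
  have m: "k < 6 \<Longrightarrow> (6*i + k) mod (6*2^p) = 6*i + k" for k using mod6[of k i "2^p"] i by simp
  have m5: "(6*i + 6) mod (6*2^p) = 6 * nx p i" using mod6[of 0 "Suc i" "2^p"] by (simp add: nx_def add.commute)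
  have "t = r + 3*(2*i)" using t by simp
  then have d3: "t div 3 = 2*i + r div 3" by simp
  have "r < 6" unfolding r_def by simp
  then have "r = 0 \<or> r = 1 \<or> r = 2 \<or> r = 3 \<or> r = 4 \<or> r = 5" by linarith
  then show ?thesis
  proof (elim disjE)
    assume r: "r = 0"
    have st: "up_step (2*p+2) (vt p (6*i)) (vt p (6*i+1))"
      unfolding vt_eqs up_step_def by (rule exI[of _ "2*p"]) (use f in auto)
    have tt: "t = 6*i" using t r by simp
    have e1: "t+1 = 6*i+1" using tt by simp
    have tm: "(t+1) mod (6*2^p) = 6*i+1" unfolding e1 by (rule m) simp
    have ev: "even (t div 3)" using d3 r by simp
    show ?thesis unfolding tm using ev st tt by simp
  next
    assume r: "r = 1"
    have st: "up_step (2*p+2) (vt p (6*i+1)) (vt p (6*i+2))"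
      unfolding vt_eqs up_step_def by (rule exI[of _ "Suc (2*p)"]) (use f in auto)
    have tt: "t = 6*i+1" using t r by simp
    have e1: "t+1 = 6*i+2" using tt by simp
    have tm: "(t+1) mod (6*2^p) = 6*i+2" unfolding e1 by (rule m) simp
    have ev: "even (t div 3)" using d3 r by simp
    show ?thesis unfolding tm using ev st tt by simp
  next
    assume r: "r = 2"
    have st: "up_step (2*p+2) (vt p (6*i+2)) (vt p (6*i+3))"
      unfolding vt_eqs up_step_def by (rule exI[of _ c]) (use f in auto)
    have tt: "t = 6*i+2" using t r by simp
    have e1: "t+1 = 6*i+3" using tt by simp
    have tm: "(t+1) mod (6*2^p) = 6*i+3" unfolding e1 by (rule m) simp
    have ev: "even (t div 3)" using d3 r by simp
    show ?thesis unfolding tm using ev st tt by simp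
  next
    assume r: "r = 3"
    have st: "up_step (2*p+2) (vt p (6*i+4)) (vt p (6*i+3))"
      unfolding vt_eqs up_step_def by (rule exI[of _ "Suc (2*p)"]) (use f in auto)
    have tt: "t = 6*i+3" using t r by simp
    have e1: "t+1 = 6*i+4" using tt by simp
    have tm: "(t+1) mod (6*2^p) = 6*i+4" unfolding e1 by (rule m) simp
    have ev: "odd (t div 3)" using d3 r by simp
    show ?thesis unfolding tm using ev st tt by simp
  next
    assume r: "r = 4"
    have st: "up_step (2*p+2) (vt p (6*i+5)) (vt p (6*i+4))"
      unfolding vt_eqs up_step_def by (rule exI[of _ "2*p"]) (use f in auto)
    have tt: "t = 6*i+4" using t r by simp
    have e1: "t+1 = 6*i+5" using tt by simp
    have tm: "(t+1) mod (6*2^p) = 6*i+5" unfolding e1 by (rule m) simp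
    have ev: "odd (t div 3)" using d3 r by simp
    show ?thesis unfolding tm using ev st tt by simp
  next
    assume r: "r = 5"
    have "up_step (2*p+2) (vt p (6*nx p i)) (vt p (6*i+5))"
      unfolding vt_eqs up_step_def by (rule exI[of _ d]) (use f in auto)
    moreover have "t div 3 = 2*i+1" using d3 r by simp
    moreover have "(t+1) mod (6*2^p) = 6 * nx p i"
    proof -
      have "t+1 = 6*i+6" using t r by simp
      then show ?thesis using m5 by (simp only:)
    qed
    ultimately show ?thesis using t r by simp
  qed
qed

lemma edge_of_sub1: "S \<subseteq> T \<Longrightarrow> edge_of S T = (S, T)"
  unfolding edge_of_def by (simp add: Int_absorb2 sup.absorb2)
lemma edge_of_sub2: "T \<subseteq> S \<Longrightarrow> edge_of S T = (T, S)"
  unfolding edge_of_def by (simp add: Int_absorb1 sup.absorb1)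
lemma ins_diff: "x \<notin> X \<Longrightarrow> insert x X - X = {x}" by auto

lemma ep1: assumes "G \<notin> V" "H \<notin> V" "G \<notin> U" "H \<notin> U" "G \<noteq> H" "U = insert c V" "c \<notin> V" "c \<noteq> G"
  shows "edge_prec (edge_of (insert G V) (insert G (insert H V))) (edge_of (insert G (insert H U)) (insert G U))"
proof -
  have e1: "edge_of (insert G V) (insert G (insert H V)) = (insert G V, insert H (insert G V))"
    by (subst edge_of_sub1) auto
  have e2: "edge_of (insert G (insert H U)) (insert G U) = (insert G U, insert H (insert G U))"
    by (subst edge_of_sub2) auto
  have d1: "insert H (insert G V) - insert G V = {H}" using assms by (intro ins_diff) auto
  have d2: "insert H (insert G U) - insert G U = {H}" using assms by (intro ins_diff) auto
  have s: "insert G V \<subset> insert G U" using assms by auto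
  show ?thesis unfolding e1 e2 edge_prec_def parallel_def fst_conv snd_conv d1 d2 using s by simp
qed

lemma ep2: assumes "G \<notin> V'" "G \<notin> U" "U = insert d V'" "d \<notin> V'"
  shows "edge_prec (edge_of V' (insert G V')) (edge_of (insert G U) U)"
proof -
  have e1: "edge_of V' (insert G V') = (V', insert G V')" by (subst edge_of_sub1) auto
  have e2: "edge_of (insert G U) U = (U, insert G U)" by (subst edge_of_sub2) auto
  have d1: "insert G V' - V' = {G}" using assms by (intro ins_diff) auto
  have d2: "insert G U - U = {G}" using assms by (intro ins_diff) auto
  have s: "V' \<subset> U" using assms by auto
  show ?thesis unfolding e1 e2 edge_prec_def parallel_def fst_conv snd_conv d1 d2 using s by simp
qed

lemma edge_lem: assumes "2 \<le> p" "j < 2*2^p"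
  shows "if even j
        then edge_prec (edge_of (vt p (3 * j + 1)) (vt p (3 * j + 2)))
                       (edge_of (vt p ((3 * j + 3) mod (6*2^p))) (vt p ((3 * j + 4) mod (6*2^p))))
        else edge_prec (edge_of (vt p ((3 * j + 3) mod (6*2^p))) (vt p ((3 * j + 4) mod (6*2^p))))
                       (edge_of (vt p (3 * j + 1)) (vt p (3 * j + 2)))"
proof -
  define i where "i = j div 2"
  have i: "i < 2^p" using assms(2) unfolding i_def by auto
  obtain c d where f: "c < 2*p" "d < 2*p" "c \<notin> VV p i" "UU p i = insert c (VV p i)"
     "d \<notin> VV p (nx p i)" "UU p i = insert d (VV p (nx p i))"
     "2*p \<notin> VV p i" "Suc (2*p) \<notin> VV p i" "2*p \<notin> UU p i" "Suc (2*p) \<notin> UU p i"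
     "2*p \<notin> VV p (nx p i)" "Suc (2*p) \<notin> VV p (nx p i)"
    using facts6[OF assms(1) i] by blast
  have m: "k < 6 \<Longrightarrow> (6*i + k) mod (6*2^p) = 6*i + k" for k using mod6[of k i "2^p"] i by simp
  have m5: "(6*i + 6) mod (6*2^p) = 6 * nx p i" using mod6[of 0 "Suc i" "2^p"] by (simp add: nx_def add.commute)
  have m6: "(6*i + 7) mod (6*2^p) = 6 * nx p i + 1" using mod6[of 1 "Suc i" "2^p"] by (simp add: nx_def add.commute)
  show ?thesis
  proof (cases "even j")
    case True
    then have jj: "j = 2*i" unfolding i_def by simp
    have a1: "3*j+1 = 6*i+1" "3*j+2 = 6*i+2" "3*j+3 = 6*i+3" "3*j+4 = 6*i+4" using jj by simp_all
    have a2: "(6*i+3) mod (6*2^p) = 6*i+3" "(6*i+4) mod (6*2^p) = 6*i+4" using m by simp_all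
    have "edge_prec (edge_of (vt p (6*i+1)) (vt p (6*i+2))) (edge_of (vt p (6*i+3)) (vt p (6*i+4)))"
      unfolding vt_eqs by (rule ep1) (use f in auto)
    then show ?thesis unfolding a1 a2 using True by simp
  next
    case False
    then have jj: "j = 2*i+1" unfolding i_def by simp
    have a1: "3*j+1 = 6*i+4" "3*j+2 = 6*i+5" "3*j+3 = 6*i+6" "3*j+4 = 6*i+7" using jj by simp_all
    have "edge_prec (edge_of (vt p (6 * nx p i)) (vt p (6 * nx p i + 1))) (edge_of (vt p (6*i+4)) (vt p (6*i+5)))"
      unfolding vt_eqs by (rule ep2) (use f in auto)
    then show ?thesis unfolding a1 m5 m6 using False by simp
  qed
qed


lemma up_stepI: "k < n \<Longrightarrow> k \<notin> S \<Longrightarrow> T = insert k S \<Longrightarrow> up_step n S T"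
  unfolding up_step_def by blast
lemma neqW: "x \<in> B \<Longrightarrow> x \<notin> A \<Longrightarrow> A \<noteq> B" by blast
lemma all6: "(\<forall>t<(6::nat). P t) \<longleftrightarrow> P 0 \<and> P 1 \<and> P 2 \<and> P 3 \<and> P 4 \<and> P 5"
proof
  assume "\<forall>t<(6::nat). P t" then show "P 0 \<and> P 1 \<and> P 2 \<and> P 3 \<and> P 4 \<and> P 5" by simp
next
  assume a: "P 0 \<and> P 1 \<and> P 2 \<and> P 3 \<and> P 4 \<and> P 5"
  show "\<forall>t<(6::nat). P t"
  proof (intro allI impI)
    fix t :: nat assume "t < 6"
    then have "t = 0 \<or> t = 1 \<or> t = 2 \<or> t = 3 \<or> t = 4 \<or> t = 5" by linarith
    then show "P t" using a by (elim disjE) simp_all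
  qed
qed
lemma all2: "(\<forall>t<(2::nat). P t) \<longleftrightarrow> P 0 \<and> P 1"
proof
  assume "\<forall>t<(2::nat). P t" then show "P 0 \<and> P 1" by simp
next
  assume a: "P 0 \<and> P 1"
  show "\<forall>t<(2::nat). P t"
  proof (intro allI impI)
    fix t :: nat assume "t < 2"
    then have "t = 0 \<or> t = 1" by linarith
    then show "P t" using a by (elim disjE) simp_all
  qed
qed

lemma case0: "\<exists>(vs :: nat set list) (M :: nat).
    set vs \<subseteq> Pow {..<4} \<and> distinct vs \<and> length vs = 3 * M \<and>
    even M \<and> M \<ge> 2 ^ 0 \<and>
    (\<forall>t < 3 * M.
       (if even (t div 3) then up_step 4 (vs ! t) (vs ! ((t + 1) mod (3 * M)))
        else up_step 4 (vs ! ((t + 1) mod (3 * M))) (vs ! t))) \<and>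
    (\<forall>j < M.
       (if even j
        then edge_prec (edge_of (vs ! (3 * j + 1)) (vs ! (3 * j + 2)))
                       (edge_of (vs ! ((3 * j + 3) mod (3 * M))) (vs ! ((3 * j + 4) mod (3 * M))))
        else edge_prec (edge_of (vs ! ((3 * j + 3) mod (3 * M))) (vs ! ((3 * j + 4) mod (3 * M))))
                       (edge_of (vs ! (3 * j + 1)) (vs ! (3 * j + 2)))))"
proof -
  define vs :: "nat set list" where "vs = [{}, {0}, {0,1}, {0,1,2}, {0,2}, {2}]"
  have n: "vs ! 0 = {}" "vs ! 1 = {0}" "vs ! 2 = {0,1}" "vs ! 3 = {0,1,2}" "vs ! 4 = {0,2}" "vs ! 5 = {2}"
    unfolding vs_def by simp_all
  have n2: "vs ! Suc (Suc 0) = {0,1}" "vs ! Suc (Suc (Suc 0)) = {0,1,2}"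
     "vs ! Suc (Suc (Suc (Suc 0))) = {0,2}" "vs ! Suc (Suc (Suc (Suc (Suc 0)))) = {2}"
    unfolding vs_def by simp_all
  have u1: "up_step 4 {} {0}" by (rule up_stepI[of 0]; auto)
  have u2: "up_step 4 {0} {0,1}" by (rule up_stepI[of 1]; auto)
  have u3: "up_step 4 {0,1} {0,1,2}" by (rule up_stepI[of 2]; auto)
  have u4: "up_step 4 {0,2} {0,1,2}" by (rule up_stepI[of 1]; auto)
  have u5: "up_step 4 {2} {0,2}" by (rule up_stepI[of 0]; auto)
  have u6: "up_step 4 {} {2}" by (rule up_stepI[of 2]; auto)
  note u = u1 u2 u3 u4 u5 u6
  have st: "\<forall>t < 6.
       (if even (t div 3) then up_step 4 (vs ! t) (vs ! ((t + 1) mod 6))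
        else up_step 4 (vs ! ((t + 1) mod 6)) (vs ! t))"
    unfolding all6 using u n n2 by simp
  have e1: "edge_prec (edge_of {0} {0,1}) (edge_of {0,1,2} {0,2})"
    unfolding edge_prec_def parallel_def edge_of_def by auto
  have e2: "edge_prec (edge_of {} {0}) (edge_of {0,2} {2})"
    unfolding edge_prec_def parallel_def edge_of_def by auto
  have ed: "\<forall>j < 2.
       (if even j
        then edge_prec (edge_of (vs ! (3 * j + 1)) (vs ! (3 * j + 2)))
                       (edge_of (vs ! ((3 * j + 3) mod 6)) (vs ! ((3 * j + 4) mod 6)))
        else edge_prec (edge_of (vs ! ((3 * j + 3) mod 6)) (vs ! ((3 * j + 4) mod 6)))
                       (edge_of (vs ! (3 * j + 1)) (vs ! (3 * j + 2))))"
    unfolding all2 using e1 e2 n n2 by simp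
  have d: "distinct vs"
    unfolding vs_def
    apply simp
    apply (intro conjI)
      apply (rule neqW[of 2]; simp)
     apply (rule neqW[of 2]; simp)
    apply (rule not_sym, rule neqW[of 1]; simp)
    done
  have l: "length vs = 3*2" by (simp add: vs_def)
  have s: "set vs \<subseteq> Pow {..<4}" unfolding vs_def by simp
  have t6: "(3::nat) * 2 = 6" by simp
  show ?thesis
    apply (rule exI[of _ vs], rule exI[of _ 2])
    unfolding t6 using st ed d s l by (intro conjI; (assumption | simp))
qed

theorem lemma10:
  fixes m n :: nat
  assumes "n = 2 * m + 4"
  shows "\<exists>(vs :: nat set list) (M :: nat).
    set vs \<subseteq> Pow {..<n} \<and> distinct vs \<and> length vs = 3 * M \<and>
    even M \<and> M \<ge> 2 ^ m \<and>
    (\<forall>t < 3 * M.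
       (if even (t div 3) then up_step n (vs ! t) (vs ! ((t + 1) mod (3 * M)))
        else up_step n (vs ! ((t + 1) mod (3 * M))) (vs ! t))) \<and>
    (\<forall>j < M.
       (if even j
        then edge_prec (edge_of (vs ! (3 * j + 1)) (vs ! (3 * j + 2)))
                       (edge_of (vs ! ((3 * j + 3) mod (3 * M))) (vs ! ((3 * j + 4) mod (3 * M))))
        else edge_prec (edge_of (vs ! ((3 * j + 3) mod (3 * M))) (vs ! ((3 * j + 4) mod (3 * M))))
                       (edge_of (vs ! (3 * j + 1)) (vs ! (3 * j + 2)))))"
proof (cases "m = 0")
  case True
  have n4: "n = 4" using assms True by simp
  show ?thesis unfolding n4 True by (rule case0)
next
  case False
  define p where "p = m+1"
  have p2: "2 \<le> p" using False by (simp add: p_def)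
  have n: "n = 2*p+2" using assms by (simp add: p_def)
  define vs where "vs = map (vt p) [0..<6*2^p]"
  have L: "length vs = 3*(2*2^p)" by (simp add: vs_def)
  have nth: "t < 6*2^p \<Longrightarrow> vs ! t = vt p t" for t by (simp add: vs_def)
  have M3: "3*(2*2^p) = (6::nat)*2^p" by simp
  have ml: "x mod (6*2^p) < (6::nat)*2^p" for x by simp
  show ?thesis
  proof (intro exI[of _ vs] exI[of _ "2*2^p"] conjI)
    show "set vs \<subseteq> Pow {..<n}" using vt_sub[of p] n by (auto simp: vs_def)
    show "distinct vs" unfolding vs_def distinct_map using vt_inj[OF p2] by (simp add: lessThan_atLeast0)
    show "length vs = 3*(2*2^p)" by (fact L)
    show "even (2*2^p::nat)" by simp
    have h: "(2::nat)^m \<le> 2^p" unfolding p_def by (intro power_increasing) auto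
    show "2^m \<le> (2*2^p::nat)" using h by linarith
    show "\<forall>t::nat<3*(2*2^p). if even (t div 3) then up_step n (vs ! t) (vs ! ((t + 1) mod (3 * (2*2^p))))
        else up_step n (vs ! ((t + 1) mod (3 * (2*2^p)))) (vs ! t)"
      unfolding M3
    proof (intro allI impI)
      fix t :: nat assume t: "t < 6*2^p"
      show "if even (t div 3) then up_step n (vs ! t) (vs ! ((t + 1) mod (6*2^p)))
        else up_step n (vs ! ((t + 1) mod (6*2^p))) (vs ! t)"
        unfolding nth[OF t] nth[OF ml] n by (rule step_lem[OF p2 t])
    qed
    show "\<forall>j::nat<2*2^p. if even j
        then edge_prec (edge_of (vs ! (3 * j + 1)) (vs ! (3 * j + 2)))
                       (edge_of (vs ! ((3 * j + 3) mod (3 * (2*2^p)))) (vs ! ((3 * j + 4) mod (3 * (2*2^p)))))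
        else edge_prec (edge_of (vs ! ((3 * j + 3) mod (3 * (2*2^p)))) (vs ! ((3 * j + 4) mod (3 * (2*2^p)))))
                       (edge_of (vs ! (3 * j + 1)) (vs ! (3 * j + 2)))"
      unfolding M3
    proof (intro allI impI)
      fix j :: nat assume j: "j < 2*2^p"
      have a: "3*j+1 < 6*2^p" "3*j+2 < 6*2^p" using j by linarith+
      show "if even j
        then edge_prec (edge_of (vs ! (3 * j + 1)) (vs ! (3 * j + 2)))
                       (edge_of (vs ! ((3 * j + 3) mod (6*2^p))) (vs ! ((3 * j + 4) mod (6*2^p))))
        else edge_prec (edge_of (vs ! ((3 * j + 3) mod (6*2^p))) (vs ! ((3 * j + 4) mod (6*2^p))))
                       (edge_of (vs ! (3 * j + 1)) (vs ! (3 * j + 2)))"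
        unfolding nth[OF a(1)] nth[OF a(2)] nth[OF ml] by (rule edge_lem[OF p2 j])
    qed
  qed
qed

end
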